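(* Let $0<q<1$, $I=[0,b)$ with $0<b\le\infty$, and let $u_0:I\to\mathbb{R}$ be continuous with $1-(1-q)tu_0(t)>0$ and $1+(1-q)tu_0(qt)>0$ for all $t\in I$. Put $$V(x)=\partial_qu_0(x)+u_0(x)u_0(qx),\qquad x\in I\setminus\{0\}.$$ Then for all constants $D,F\in\mathbb{R}$ the function $$\psi(x)=\exp\Big(-\frac{1}{1-q}\int_0^x\frac{\ln(1-(1-q)tu_0(t))}{t}d_qt\Big)\Big[D+F\int_0^x\frac{1}{1-(1-q)tu_0(t)}\exp\Big(\frac{1}{1-q}\int_0^t\frac1s\ln\frac{1-(1-q)su_0(s)}{1+(1-q)su_0(qs)}d_qs\Big)d_qt\Big]$$ solves the $q$-difference Schrödinger equation $-\partial_q^2\psi(x)+V(x)\psi(x)=0$ on $I\setminus\{0\}$ (here $\partial_q^2\psi$ is computed by first taking $\partial_q\psi$ on $I\setminus\{0\}$ and extending it by continuity to $0$, where it exists), with $\psi(0)=D$.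
   Context: $\partial_q f(x)=\dfrac{f(x)-f(qx)}{(1-q)x}$ for $x\neq0$; $\int_0^x f(t)\,d_qt=\sum_{n\ge0}(1-q)q^nx\,f(q^nx)$ (Jackson $q$-integral). *)

theory Defs
  imports Complex_Main "HOL-Library.Extended_Real"
begin

definition qder :: "real \<Rightarrow> (real \<Rightarrow> real) \<Rightarrow> real \<Rightarrow> real" where
  "qder q f x = (f x - f (q * x)) / ((1 - q) * x)"

definition qint :: "real \<Rightarrow> (real \<Rightarrow> real) \<Rightarrow> real \<Rightarrow> real" where
  "qint q f x = (\<Sum>n. (1 - q) * q ^ n * x * f (q ^ n * x))"

end

theory Submission
  imports Defs
begin

lemma qint_step:
  assumes "summable (\<lambda>n. (1-q)*q^n*y*f(q^n*y))"
  shows "qint q f y = (1-q)*y*f y + qint q f (q*y)"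
proof -
  have e: "(\<lambda>n. (1-q)*q^Suc n*y*f(q^Suc n*y)) = (\<lambda>n. (1-q)*q^n*(q*y)*f(q^n*(q*y)))"
    by (simp add: mult_ac)
  show ?thesis
    using suminf_split_head[OF assms] unfolding qint_def e by simp
qed

lemma qint_bound:
  fixes q y x K :: real and f :: "real \<Rightarrow> real"
  assumes q0: "0 < q" and q1: "q < 1" and y0: "0 < y" and yx: "y \<le> x"
    and bd: "\<And>t. 0 < t \<Longrightarrow> t \<le> x \<Longrightarrow> \<bar>f t\<bar> \<le> K"
  shows "summable (\<lambda>n. (1-q)*q^n*y*f(q^n*y))" and "\<bar>qint q f y\<bar> \<le> K*y"
proof -
  have pt: "0 < q^n*y \<and> q^n*y \<le> x" for n
  proof -
    have "q^n \<le> 1" using q0 q1 by (simp add: power_le_one)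
    hence "q^n*y \<le> 1*y" using y0 by (intro mult_right_mono) auto
    hence "q^n*y \<le> x" using yx by linarith
    thus ?thesis using y0 q0 by (simp add: zero_less_mult_iff)
  qed
  have le: "norm ((1-q)*q^n*y*f(q^n*y)) \<le> ((1-q)*y*K)*q^n" for n
  proof -
    have nn: "0 \<le> (1-q)*q^n*y" using q0 q1 y0 by simp
    have "norm ((1-q)*q^n*y*f(q^n*y)) = ((1-q)*q^n*y)*\<bar>f(q^n*y)\<bar>"
      using nn by (simp only: real_norm_def abs_mult[of "(1-q)*q^n*y"] abs_of_nonneg)
    also have "\<dots> \<le> ((1-q)*q^n*y)*K"
      using pt[of n] nn by (intro mult_left_mono bd) auto
    also have "\<dots> = ((1-q)*y*K)*q^n" by (simp add: mult_ac)
    finally show ?thesis .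
  qed
  have sg: "summable (\<lambda>n. ((1-q)*y*K)*q^n)"
    using q0 q1 by (intro summable_mult summable_geometric) auto
  show sm: "summable (\<lambda>n. (1-q)*q^n*y*f(q^n*y))"
    by (rule summable_comparison_test[OF _ sg]) (use le in blast)
  have sn: "summable (\<lambda>n. norm ((1-q)*q^n*y*f(q^n*y)))"
    by (rule summable_comparison_test[OF _ sg]) (use le in simp)
  have "\<bar>qint q f y\<bar> \<le> (\<Sum>n. norm ((1-q)*q^n*y*f(q^n*y)))"
    unfolding qint_def using summable_norm[OF sn] by simp
  also have "\<dots> \<le> (\<Sum>n. ((1-q)*y*K)*q^n)"
    by (rule suminf_le[OF le sn sg])
  also have "\<dots> = ((1-q)*y*K) * (1/(1-q))"
  proof -
    have "summable (\<lambda>n. q^n)" using q0 q1 by (intro summable_geometric) auto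
    moreover have "(\<Sum>n. q^n) = 1/(1-q)" using q0 q1 by (intro suminf_geometric) auto
    ultimately show ?thesis by (simp add: suminf_mult)
  qed
  also have "\<dots> = K*y" using q1 by simp
  finally show "\<bar>qint q f y\<bar> \<le> K*y" .
qed

lemma qint_zero: "qint q f 0 = 0"
  unfolding qint_def by simp

lemma abs_ln_le:
  fixes z m :: real
  assumes "0 < m" "m \<le> z"
  shows "\<bar>ln z\<bar> \<le> \<bar>z - 1\<bar> / min m 1"
proof (cases "z \<ge> 1")
  case True
  have "\<bar>ln z\<bar> = ln z" using True by simp
  also have "\<dots> \<le> z - 1" using assms by (intro ln_le_minus_one) auto
  also have "\<dots> \<le> \<bar>z - 1\<bar> / min m 1"
  proof -
    have mm: "0 < min m 1" "min m 1 \<le> 1" using assms by auto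
    have "(z - 1) * min m 1 \<le> (z - 1) * 1" using True mm by (intro mult_left_mono) auto
    hence "(z - 1) \<le> (z - 1) / min m 1" using mm by (simp add: le_divide_eq)
    thus ?thesis using True by simp
  qed
  finally show ?thesis .
next
  case False
  have z0: "0 < z" using assms by simp
  have "\<bar>ln z\<bar> = ln (1/z)" using False z0 by (simp add: ln_div)
  also have "\<dots> \<le> 1/z - 1" using z0 by (intro ln_le_minus_one) auto
  also have "\<dots> = (1 - z)/z" using z0 by (simp add: field_simps)
  also have "\<dots> \<le> (1 - z)/ min m 1" using False assms
    by (intro divide_left_mono) (auto simp: min_def)
  also have "\<dots> = \<bar>z - 1\<bar> / min m 1" using False by simp
  finally show ?thesis .
qed

theorem corollary1:
  fixes q :: real and b :: ereal and u0 :: "real \<Rightarrow> real" and D F :: real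
  assumes hq0: "0 < q" and hq1: "q < 1" and hb: "0 < b"
    and hcont: "continuous_on {x. 0 \<le> x \<and> ereal x < b} u0"
    and hpos1: "\<forall>t\<in>{x. 0 \<le> x \<and> ereal x < b}. 1 - (1 - q) * t * u0 t > 0"
    and hpos2: "\<forall>t\<in>{x. 0 \<le> x \<and> ereal x < b}. 1 + (1 - q) * t * u0 (q * t) > 0"
  defines "V \<equiv> (\<lambda>x. qder q u0 x + u0 x * u0 (q * x))"
    and "\<psi> \<equiv> (\<lambda>x. exp (- (1 / (1 - q)) * qint q (\<lambda>t. ln (1 - (1 - q) * t * u0 t) / t) x)
            * (D + F * qint q (\<lambda>t. (1 / (1 - (1 - q) * t * u0 t))
                 * exp ((1 / (1 - q)) * qint q (\<lambda>s. (1 / s) *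
                      ln ((1 - (1 - q) * s * u0 s) / (1 + (1 - q) * s * u0 (q * s)))) t)) x))"
  shows "(\<forall>x\<in>{x. 0 \<le> x \<and> ereal x < b}. x \<noteq> 0 \<longrightarrow>
            - qder q (qder q \<psi>) x + V x * \<psi> x = 0) \<and> \<psi> 0 = D"
proof -
  define I where "I = {x. 0 \<le> x \<and> ereal x < b}"
  define a where "a = (\<lambda>t. 1 - (1 - q) * t * u0 t)"
  define c where "c = (\<lambda>t. 1 + (1 - q) * t * u0 (q * t))"
  define A where "A = qint q (\<lambda>t. ln (a t) / t)"
  define P where "P = (\<lambda>y. exp (- (1 / (1 - q)) * A y))"
  define fB where "fB = (\<lambda>s. (1 / s) * ln (a s / c s))"
  define B where "B = qint q fB"
  define E where "E = (\<lambda>t. exp ((1 / (1 - q)) * B t))"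
  define g where "g = (\<lambda>t. (1 / a t) * E t)"
  define G where "G = qint q g"
  have psi_eq: "\<psi> = (\<lambda>y. P y * (D + F * G y))"
    unfolding \<psi>_def P_def A_def G_def g_def E_def B_def fB_def a_def c_def by (rule refl)
  have "\<psi> 0 = D" unfolding psi_eq P_def A_def G_def qint_zero by simp
  moreover have "- qder q (qder q \<psi>) x + V x * \<psi> x = 0" if xI: "x \<in> I" and xn: "x \<noteq> 0" for x
  proof -
    have x0: "0 < x" using xI xn unfolding I_def by auto
    define S where "S = {0..x}"
    have SI: "S \<subseteq> I" unfolding S_def I_def using xI unfolding I_def
      by (auto intro: le_less_trans[of _ "ereal x"])
    have qS: "q * t \<in> S" if "t \<in> S" for t
    proof -
      have "0 \<le> t" "t \<le> x" using that unfolding S_def by auto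
      moreover have "q * t \<le> 1 * t" using \<open>0 \<le> t\<close> hq1 by (intro mult_right_mono) auto
      ultimately show ?thesis unfolding S_def using hq0 by auto
    qed
    have cu: "continuous_on S u0" using hcont SI unfolding I_def by (rule continuous_on_subset)
    have cuq: "continuous_on S (\<lambda>t. u0 (q * t))"
      by (rule continuous_on_compose2[OF cu]) (auto intro!: continuous_intros simp: qS)
    have ca: "continuous_on S a" unfolding a_def by (intro continuous_intros cu)
    have cc: "continuous_on S c" unfolding c_def by (intro continuous_intros cuq)
    have cS: "compact S" "S \<noteq> {}" unfolding S_def using x0 by auto
    obtain tM where "tM \<in> S" and tM: "\<forall>t\<in>S. \<bar>u0 t\<bar> \<le> \<bar>u0 tM\<bar>"
      using continuous_attains_sup[OF cS, of "\<lambda>t. \<bar>u0 t\<bar>"] cu by (auto intro: continuous_intros)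
    define M where "M = \<bar>u0 tM\<bar>"
    obtain ta where "ta \<in> S" and ta: "\<forall>t\<in>S. a ta \<le> a t"
      using continuous_attains_inf[OF cS ca] by auto
    obtain tc where "tc \<in> S" and tc: "\<forall>t\<in>S. c tc \<le> c t"
      using continuous_attains_inf[OF cS cc] by auto
    have apos: "0 < a t" if "t \<in> I" for t using hpos1 that unfolding a_def I_def by auto
    have cpos: "0 < c t" if "t \<in> I" for t using hpos2 that unfolding c_def I_def by auto
    define mm where "mm = min (a ta) (c tc)"
    have mm0: "0 < mm" unfolding mm_def using apos cpos \<open>ta \<in> S\<close> \<open>tc \<in> S\<close> SI by auto
    have amm: "mm \<le> a t" and cmm: "mm \<le> c t" if "t \<in> S" for t
      using ta tc that unfolding mm_def by force+
    define K1 where "K1 = (1 - q) * M / min mm 1"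
    have bA: "\<bar>ln (a t) / t\<bar> \<le> K1" if "0 < t" "t \<le> x" for t
    proof -
      have tS: "t \<in> S" using that unfolding S_def by auto
      have m1: "0 < min mm 1" using mm0 by simp
      have "\<bar>a t - 1\<bar> = (1 - q) * t * \<bar>u0 t\<bar>"
        unfolding a_def using hq1 that by (simp add: abs_mult)
      also have "\<dots> \<le> (1 - q) * t * M"
        unfolding M_def using tM tS qS hq1 that by (intro mult_left_mono) auto
      finally have h1: "\<bar>a t - 1\<bar> \<le> (1 - q) * t * M" .
      have "\<bar>ln (a t)\<bar> \<le> \<bar>a t - 1\<bar> / min mm 1"
        by (rule abs_ln_le[OF mm0 amm[OF tS]])
      also have "\<dots> \<le> (1 - q) * t * M / min mm 1"
        using h1 m1 by (intro divide_right_mono) auto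
      also have "\<dots> = K1 * t" unfolding K1_def by simp
      finally have "\<bar>ln (a t)\<bar> \<le> K1 * t" .
      thus ?thesis using that by (simp add: abs_div pos_divide_le_eq)
    qed
    have bC: "\<bar>ln (c t) / t\<bar> \<le> K1" if "0 < t" "t \<le> x" for t
    proof -
      have tS: "t \<in> S" using that unfolding S_def by auto
      have m1: "0 < min mm 1" using mm0 by simp
      have "\<bar>c t - 1\<bar> = (1 - q) * t * \<bar>u0 (q * t)\<bar>"
        unfolding c_def using hq1 that by (simp add: abs_mult)
      also have "\<dots> \<le> (1 - q) * t * M"
        unfolding M_def using tM tS qS hq1 that by (intro mult_left_mono) auto
      finally have h1: "\<bar>c t - 1\<bar> \<le> (1 - q) * t * M" .
      have "\<bar>ln (c t)\<bar> \<le> \<bar>c t - 1\<bar> / min mm 1"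
        by (rule abs_ln_le[OF mm0 cmm[OF tS]])
      also have "\<dots> \<le> (1 - q) * t * M / min mm 1"
        using h1 m1 by (intro divide_right_mono) auto
      also have "\<dots> = K1 * t" unfolding K1_def by simp
      finally have "\<bar>ln (c t)\<bar> \<le> K1 * t" .
      thus ?thesis using that by (simp add: abs_div pos_divide_le_eq)
    qed
    have tI: "t \<in> I" if "0 < t" "t \<le> x" for t using that SI unfolding S_def by auto
    have bB: "\<bar>fB t\<bar> \<le> 2 * K1" if "0 < t" "t \<le> x" for t
    proof -
      have "fB t = ln (a t) / t - ln (c t) / t"
        unfolding fB_def using apos[OF tI[OF that]] cpos[OF tI[OF that]]
        by (simp add: ln_div diff_divide_distrib)
      thus ?thesis using bA[OF that] bC[OF that] by linarith
    qed
    have bBy: "\<bar>B y\<bar> \<le> 2 * K1 * x" if "0 < y" "y \<le> x" for y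
    proof -
      have "\<bar>B y\<bar> \<le> 2 * K1 * y" unfolding B_def
        by (rule qint_bound(2)[OF hq0 hq1 that]) (rule bB)
      also have "\<dots> \<le> 2 * K1 * x"
        using that bB[OF that] by (intro mult_left_mono) auto
      finally show ?thesis .
    qed
    define K3 where "K3 = (1 / mm) * exp ((1 / (1 - q)) * (2 * K1 * x))"
    have bg: "\<bar>g t\<bar> \<le> K3" if "0 < t" "t \<le> x" for t
    proof -
      have at: "mm \<le> a t" using amm that unfolding S_def by auto
      have "\<bar>g t\<bar> = (1 / a t) * E t" unfolding g_def E_def using apos[OF tI[OF that]] by simp
      also have "\<dots> \<le> (1 / mm) * exp ((1 / (1 - q)) * (2 * K1 * x))" unfolding E_def
      proof (intro mult_mono)
        show "1 / a t \<le> 1 / mm" using at mm0 by (simp add: divide_simps)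
        show "exp (1 / (1 - q) * B t) \<le> exp (1 / (1 - q) * (2 * K1 * x))"
          using bBy[OF that] hq1 by (auto intro!: divide_right_mono)
      qed (use mm0 in auto)
      finally show ?thesis unfolding K3_def .
    qed
    have sA: "summable (\<lambda>n. (1-q)*q^n*y*(\<lambda>t. ln (a t) / t)(q^n*y))" if "0 < y" "y \<le> x" for y
      by (rule qint_bound(1)[OF hq0 hq1 that]) (rule bA)
    have sB: "summable (\<lambda>n. (1-q)*q^n*y*fB(q^n*y))" if "0 < y" "y \<le> x" for y
      by (rule qint_bound(1)[OF hq0 hq1 that]) (rule bB)
    have sG: "summable (\<lambda>n. (1-q)*q^n*y*g(q^n*y))" if "0 < y" "y \<le> x" for y
      by (rule qint_bound(1)[OF hq0 hq1 that]) (rule bg)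
    have PA: "P (q * y) = a y * P y" if "0 < y" "y \<le> x" for y
    proof -
      have ay: "0 < a y" using apos[OF tI[OF that]] .
      have "A y = (1-q)*y*(ln (a y) / y) + A (q*y)" unfolding A_def
        by (rule qint_step) (use sA[OF that] in simp)
      hence "A y = (1-q) * ln (a y) + A (q*y)" using that by simp
      hence "- (1 / (1 - q)) * A y = - (1 / (1 - q)) * ((1-q) * ln (a y)) + (- (1 / (1 - q)) * A (q*y))"
        by (simp only: distrib_left)
      hence "- (1 / (1 - q)) * A y = - ln (a y) + (- (1 / (1 - q)) * A (q*y))" using hq1
        by simp
      hence "P y = exp (- ln (a y)) * P (q * y)" unfolding P_def
        by (simp add: exp_add[symmetric])
      thus ?thesis using ay by (simp add: exp_minus field_simps)
    qed
    have EB: "E (q * y) = E y * c y / a y" if "0 < y" "y \<le> x" for y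
    proof -
      have ay: "0 < a y" using apos[OF tI[OF that]] .
      have cy: "0 < c y" using cpos[OF tI[OF that]] .
      have "B y = (1-q)*y*fB y + B (q*y)" unfolding B_def
        by (rule qint_step) (use sB[OF that] in simp)
      hence "B y = (1-q) * ln (a y / c y) + B (q*y)" using that unfolding fB_def by simp
      hence "(1 / (1 - q)) * B y = (1 / (1 - q)) * ((1-q) * ln (a y / c y)) + (1 / (1 - q)) * B (q*y)"
        by (simp only: distrib_left)
      hence "(1 / (1 - q)) * B y = ln (a y / c y) + (1 / (1 - q)) * B (q*y)" using hq1
        by simp
      hence "E y = exp (ln (a y / c y)) * E (q * y)" unfolding E_def
        by (simp add: exp_add[symmetric])
      thus ?thesis using ay cy by (simp add: field_simps)
    qed
    have GG: "G y = (1-q)*y*g y + G (q*y)" if "0 < y" "y \<le> x" for y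
      unfolding G_def by (rule qint_step) (use sG[OF that] in simp)
    have D1: "qder q \<psi> y = u0 y * \<psi> y + F * (P y * E y)" if "0 < y" "y \<le> x" for y
    proof -
      have ay: "0 < a y" using apos[OF tI[OF that]] .
      have ad: "a y = 1 - (1 - q) * y * u0 y" unfolding a_def ..
      have "\<psi> (q * y) = a y * P y * (D + F * (G y - (1-q)*y*(E y / a y)))"
        unfolding psi_eq using PA[OF that] GG[OF that] by (simp add: g_def)
      also have "\<dots> = a y * P y * (D + F * G y) - (1-q)*y*F*P y*E y"
        using ay by (simp add: field_simps)
      finally have pq: "\<psi> (q * y) = a y * \<psi> y - (1-q)*y*F*P y*E y"
        unfolding psi_eq by simp
      show ?thesis unfolding qder_def pq ad using that hq1
        by (simp add: field_simps)
    qed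
    have qx: "0 < q * x" "q * x \<le> x" using qS[of x] hq0 x0 unfolding S_def by auto
    have W: "P (q * x) * E (q * x) = c x * (P x * E x)"
      using PA[OF x0 order.refl] EB[OF x0 order.refl] apos[OF tI[OF x0 order.refl]] by simp
    have alg: "- ((d1 - d2) / h) + ((u - v) / h + u * v) * p = 0"
      if "h \<noteq> 0" "d1 = u * p + F * w" "d2 = v * p2 + F * w2" "p2 = p - h * d1"
         "w2 = (1 + h * v) * w" for h d1 d2 u v p p2 w w2 :: real
      using that by (simp add: field_simps) algebra
    have d1: "qder q \<psi> x = u0 x * \<psi> x + F * (P x * E x)" by (rule D1[OF x0 order.refl])
    have d2: "qder q \<psi> (q*x) = u0 (q*x) * \<psi> (q*x) + F * (P (q*x) * E (q*x))" by (rule D1[OF qx])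
    have p2: "\<psi> (q*x) = \<psi> x - ((1-q)*x) * qder q \<psi> x"
      unfolding qder_def using hq1 x0 by (simp add: field_simps)
    have h0: "(1-q)*x \<noteq> 0" using hq1 x0 by simp
    have "- ((qder q \<psi> x - qder q \<psi> (q*x)) / ((1-q)*x))
          + ((u0 x - u0 (q*x)) / ((1-q)*x) + u0 x * u0 (q*x)) * \<psi> x = 0"
      by (rule alg[OF h0 d1 d2 p2]) (simp add: W c_def)
    thus ?thesis unfolding V_def qder_def[of q "qder q \<psi>"] qder_def[of q u0] by simp
  qed
  ultimately show ?thesis unfolding I_def by blast
qed

end
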